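(* Let $A=kQ/I$ be a nondegenerate dimer algebra on a torus with center $Z$, and let $\psi:A\to A'$ be a cyclic contraction. Then for each $i\in Q_0$, $\bar\tau\psi(Ze_i)\subseteq R$.
   Context: Let $k$ be an algebraically closed field. A dimer quiver is a finite quiver $Q$ (vertices $Q_0$, arrows $Q_1$, head/tail $\operatorname{h},\operatorname{t}$) whose underlying graph embeds in a real two-torus so that each connected component of the complement is simply connected and bounded by an oriented cycle (a unit cycle). The dimer algebra is $A=kQ/I$, $I$ generated by all $p-q$ with $p,q$ paths such that for some arrow $a$ both $pa$ and $qa$ are unit cycles. Perfect matching: $D\subseteq Q_1$ meeting each unit cycle in exactly one arrow; nondegenerate: every arrow in some perfect matching. Simple matching: perfect matching $D$ such that the subquiver with arrows $Q_1\setminus D$ contains a cycle through every vertex. Cancellative: no paths $p\neq q$ of $A$ and path $r$ with $rp=rq\neq0$ or $pr=qr\neq0$. For a dimer algebra $A'=kQ'/I'$ with simple matchings $\mathcal{S}'$, $\tau:A'\to M_{|Q'_0|}(k[x_D:D\in\mathcal{S}'])$ is the algebra map with $\tau(e_i)=E_{ii}$, $\tau(a)=\big(\prod_{D\in\mathcal{S}',a\in D}x_D\big)E_{\operatorname{h}(a),\operatorname{t}(a)}$; $\bar\tau(p)$ is given by $\tau(p)=\bar\tau(p)E_{ji}$ for $p\in e_jA'e_i$, extended $k$-linearly. A contraction $\psi:A\to A'$: $A'=kQ'/I'$ is a dimer algebra with $Q'$ obtained from $Q$ by contracting a set of arrows $Q_1^*\subseteq Q_1$ to vertices, the induced map $kQ\to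 kQ'$ sending $I$ into $I'$ and inducing $\psi$. It is cyclic if $A'$ is cancellative and $k[\cup_{i\in Q_0}\bar\tau\psi(e_iAe_i)]=k[\cup_{i\in Q'_0}\bar\tau(e_iA'e_i)]$. $R:=k[\cap_{i\in Q_0}\bar\tau\psi(e_iAe_i)]$ (isomorphic to the center of the homotopy algebra of $A$). *)

theory Defs
  imports "HOL-Computational_Algebra.Polynomial" "HOL-Library.Poly_Mapping"
begin

text \<open>A path is a pair (start vertex, list of arrows in traversal order).  Following the paper's convention,
  the product p q of paths means "first q, then p" (so tail p = head q).\<close>

type_synonym ('v,'a) path = "'v \<times> 'a list"

definition valid_path :: "'v set \<Rightarrow> 'a set \<Rightarrow> ('a \<Rightarrow> 'v) \<Rightarrow> ('a \<Rightarrow> 'v) \<Rightarrow> ('v,'a) path \<Rightarrow> bool" where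
  "valid_path V E h t p \<longleftrightarrow> fst p \<in> V \<and> set (snd p) \<subseteq> E \<and>
     (snd p \<noteq> [] \<longrightarrow> t (hd (snd p)) = fst p) \<and>
     (\<forall>k. Suc k < length (snd p) \<longrightarrow> h (snd p ! k) = t (snd p ! Suc k))"

definition phead :: "('a \<Rightarrow> 'v) \<Rightarrow> ('v,'a) path \<Rightarrow> 'v" where
  "phead h p = (if snd p = [] then fst p else h (last (snd p)))"

definition path_vertices :: "('a \<Rightarrow> 'v) \<Rightarrow> ('v,'a) path \<Rightarrow> 'v set" where
  "path_vertices h p = insert (fst p) (h ` set (snd p))"

definition in_kQ :: "'v set \<Rightarrow> 'a set \<Rightarrow> ('a \<Rightarrow> 'v) \<Rightarrow> ('a \<Rightarrow> 'v) \<Rightarrow> (('v,'a) path \<Rightarrow>\<^sub>0 'k::zero) \<Rightarrow> bool" where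
  "in_kQ V E h t x \<longleftrightarrow> (\<forall>p \<in> Poly_Mapping.keys x. valid_path V E h t p)"

definition pelt :: "('v,'a) path \<Rightarrow> (('v,'a) path \<Rightarrow>\<^sub>0 'k::{zero,one})" where
  "pelt p = Poly_Mapping.single p 1"

definition idem :: "'v \<Rightarrow> (('v,'a) path \<Rightarrow>\<^sub>0 'k::{zero,one})" where
  "idem i = pelt (i, [])"

definition pmul :: "('a \<Rightarrow> 'v) \<Rightarrow> (('v,'a) path \<Rightarrow>\<^sub>0 'k::semiring_0) \<Rightarrow> (('v,'a) path \<Rightarrow>\<^sub>0 'k) \<Rightarrow> (('v,'a) path \<Rightarrow>\<^sub>0 'k)" where
  "pmul h x y = (\<Sum>p\<in>Poly_Mapping.keys x. \<Sum>q\<in>Poly_Mapping.keys y.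
      if fst p = phead h q then Poly_Mapping.single (fst q, snd q @ snd p) (Poly_Mapping.lookup x p * Poly_Mapping.lookup y q) else 0)"

definition corner :: "'v set \<Rightarrow> 'a set \<Rightarrow> ('a \<Rightarrow> 'v) \<Rightarrow> ('a \<Rightarrow> 'v) \<Rightarrow> 'v \<Rightarrow> (('v,'a) path \<Rightarrow>\<^sub>0 'k::zero) set" where
  "corner V E h t i = {x. in_kQ V E h t x \<and> (\<forall>p \<in> Poly_Mapping.keys x. fst p = i \<and> phead h p = i)}"

section \<open>Dimer quivers (combinatorial description of a cellular torus embedding)\<close>

text \<open>The unit cycles are encoded by two permutations sigp, sigm of the arrows:
  sigp a (resp. sigm a) is the arrow following a in the unique positively
  (resp. negatively) oriented unit cycle containing a.\<close>

definition orbit_len :: "('a \<Rightarrow> 'a) \<Rightarrow> 'a \<Rightarrow> nat" where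
  "orbit_len \<sigma> a = (LEAST n. 0 < n \<and> (\<sigma> ^^ n) a = a)"

definition cyc :: "('a \<Rightarrow> 'a) \<Rightarrow> 'a \<Rightarrow> 'a list" where
  "cyc \<sigma> a = map (\<lambda>n. (\<sigma> ^^ n) a) [0..<orbit_len \<sigma> a]"

definition faces :: "('a \<Rightarrow> 'a) \<Rightarrow> 'a set \<Rightarrow> 'a set set" where
  "faces \<sigma> E = (\<lambda>a. {(\<sigma> ^^ n) a | n. True}) ` E"

text \<open>rest sigma h a is the path p with p a equal to the unit cycle through a.\<close>
definition rest :: "('a \<Rightarrow> 'a) \<Rightarrow> ('a \<Rightarrow> 'v) \<Rightarrow> 'a \<Rightarrow> ('v,'a) path" where
  "rest \<sigma> h a = (h a, tl (cyc \<sigma> a))"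

definition dimer_quiver :: "'v set \<Rightarrow> 'a set \<Rightarrow> ('a \<Rightarrow> 'v) \<Rightarrow> ('a \<Rightarrow> 'v) \<Rightarrow> ('a \<Rightarrow> 'a) \<Rightarrow> ('a \<Rightarrow> 'a) \<Rightarrow> bool" where
  "dimer_quiver V E h t sp sm \<longleftrightarrow>
     finite V \<and> finite E \<and> (\<forall>a\<in>E. h a \<in> V \<and> t a \<in> V) \<and>
     bij_betw sp E E \<and> bij_betw sm E E \<and>
     (\<forall>a\<in>E. t (sp a) = h a \<and> t (sm a) = h a) \<and>
     \<comment> \<open>each vertex has a disc neighbourhood: the rotation around v is a single cycle\<close>
     (\<forall>v\<in>V. {a\<in>E. h a = v} \<noteq> {} \<and>
        (\<forall>a\<in>E. \<forall>b\<in>E. h a = v \<longrightarrow> h b = v \<longrightarrow> (\<exists>n. ((inv_into E sm \<circ> sp) ^^ n) a = b))) \<and>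
     \<comment> \<open>connected\<close>
     (\<forall>v\<in>V. \<forall>w\<in>V. (v, w) \<in> ({(t a, h a) | a. a \<in> E} \<union> {(h a, t a) | a. a \<in> E})\<^sup>*) \<and>
     \<comment> \<open>Euler characteristic 0: the closed orientable surface is a torus\<close>
     int (card V) - int (card E) + int (card (faces sp E)) + int (card (faces sm E)) = 0"

inductive_set dimer_ideal :: "'v set \<Rightarrow> 'a set \<Rightarrow> ('a \<Rightarrow> 'v) \<Rightarrow> ('a \<Rightarrow> 'v) \<Rightarrow> ('a \<Rightarrow> 'a) \<Rightarrow> ('a \<Rightarrow> 'a)
     \<Rightarrow> (('v,'a) path \<Rightarrow>\<^sub>0 'k::comm_ring_1) set"
  for V E h t sp sm where
  gen: "a \<in> E \<Longrightarrow> pelt (rest sp h a) - pelt (rest sm h a) \<in> dimer_ideal V E h t sp sm"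
| zero: "0 \<in> dimer_ideal V E h t sp sm"
| add: "x \<in> dimer_ideal V E h t sp sm \<Longrightarrow> y \<in> dimer_ideal V E h t sp sm \<Longrightarrow> x + y \<in> dimer_ideal V E h t sp sm"
| smult: "x \<in> dimer_ideal V E h t sp sm \<Longrightarrow> Poly_Mapping.map ((*) c) x \<in> dimer_ideal V E h t sp sm"
| lmult: "x \<in> dimer_ideal V E h t sp sm \<Longrightarrow> in_kQ V E h t r \<Longrightarrow> pmul h r x \<in> dimer_ideal V E h t sp sm"
| rmult: "x \<in> dimer_ideal V E h t sp sm \<Longrightarrow> in_kQ V E h t r \<Longrightarrow> pmul h x r \<in> dimer_ideal V E h t sp sm"

text \<open>Representatives in kQ of the elements of the center Z of A.\<close>
definition center :: "'v set \<Rightarrow> 'a set \<Rightarrow> ('a \<Rightarrow> 'v) \<Rightarrow> ('a \<Rightarrow> 'v) \<Rightarrow> ('a \<Rightarrow> 'a) \<Rightarrow> ('a \<Rightarrow> 'a)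
     \<Rightarrow> (('v,'a) path \<Rightarrow>\<^sub>0 'k::comm_ring_1) set" where
  "center V E h t sp sm = {z. in_kQ V E h t z \<and>
     (\<forall>x. in_kQ V E h t x \<longrightarrow> pmul h z x - pmul h x z \<in> dimer_ideal V E h t sp sm)}"

definition cancellative :: "'k::comm_ring_1 itself \<Rightarrow> 'v set \<Rightarrow> 'a set \<Rightarrow> ('a \<Rightarrow> 'v) \<Rightarrow> ('a \<Rightarrow> 'v)
     \<Rightarrow> ('a \<Rightarrow> 'a) \<Rightarrow> ('a \<Rightarrow> 'a) \<Rightarrow> bool" where
  "cancellative (K::'k itself) V E h t sp sm \<longleftrightarrow>
     (\<forall>p q r. valid_path V E h t p \<longrightarrow> valid_path V E h t q \<longrightarrow> valid_path V E h t r \<longrightarrow>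
        (pelt p - pelt q :: ('v,'a) path \<Rightarrow>\<^sub>0 'k) \<notin> dimer_ideal V E h t sp sm \<longrightarrow>
        \<not> ((pmul h (pelt r) (pelt p) - pmul h (pelt r) (pelt q) :: ('v,'a) path \<Rightarrow>\<^sub>0 'k) \<in> dimer_ideal V E h t sp sm
             \<and> (pmul h (pelt r) (pelt p) :: ('v,'a) path \<Rightarrow>\<^sub>0 'k) \<notin> dimer_ideal V E h t sp sm) \<and>
        \<not> ((pmul h (pelt p) (pelt r) - pmul h (pelt q) (pelt r) :: ('v,'a) path \<Rightarrow>\<^sub>0 'k) \<in> dimer_ideal V E h t sp sm
             \<and> (pmul h (pelt p) (pelt r) :: ('v,'a) path \<Rightarrow>\<^sub>0 'k) \<notin> dimer_ideal V E h t sp sm))"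

definition perfect_matching :: "'a set \<Rightarrow> ('a \<Rightarrow> 'a) \<Rightarrow> ('a \<Rightarrow> 'a) \<Rightarrow> 'a set \<Rightarrow> bool" where
  "perfect_matching E sp sm D \<longleftrightarrow> D \<subseteq> E \<and>
     (\<forall>F \<in> faces sp E. card (D \<inter> F) = 1) \<and> (\<forall>F \<in> faces sm E. card (D \<inter> F) = 1)"

definition nondegenerate :: "'a set \<Rightarrow> ('a \<Rightarrow> 'a) \<Rightarrow> ('a \<Rightarrow> 'a) \<Rightarrow> bool" where
  "nondegenerate E sp sm \<longleftrightarrow> (\<forall>a\<in>E. \<exists>D. perfect_matching E sp sm D \<and> a \<in> D)"

definition simple_matchings :: "'v set \<Rightarrow> 'a set \<Rightarrow> ('a \<Rightarrow> 'v) \<Rightarrow> ('a \<Rightarrow> 'v) \<Rightarrow> ('a \<Rightarrow> 'a) \<Rightarrow> ('a \<Rightarrow> 'a) \<Rightarrow> 'a set set" where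
  "simple_matchings V E h t sp sm = {D. perfect_matching E sp sm D \<and>
     (\<exists>c. valid_path V E h t c \<and> snd c \<noteq> [] \<and> phead h c = fst c \<and>
          set (snd c) \<subseteq> E - D \<and> V \<subseteq> path_vertices h c)}"

text \<open>Polynomials in the variables x_D (D :: 'a set) over k, as finitely supported
  maps from monomials (exponent vectors) to coefficients.\<close>
type_synonym ('a,'k) mpoly = "('a set \<Rightarrow>\<^sub>0 nat) \<Rightarrow>\<^sub>0 'k"

definition arrow_exp :: "'a set set \<Rightarrow> 'a \<Rightarrow> ('a set \<Rightarrow>\<^sub>0 nat)" where
  "arrow_exp S a = (\<Sum>D\<in>{D\<in>S. a \<in> D}. Poly_Mapping.single D 1)"

definition taubar :: "'a set set \<Rightarrow> (('w,'a) path \<Rightarrow>\<^sub>0 'k::comm_ring_1) \<Rightarrow> ('a,'k) mpoly" where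
  "taubar S x = (\<Sum>p\<in>Poly_Mapping.keys x. Poly_Mapping.single (sum_list (map (arrow_exp S) (snd p))) (Poly_Mapping.lookup x p))"

inductive_set kgen :: "('a,'k::comm_ring_1) mpoly set \<Rightarrow> ('a,'k) mpoly set" for X where
  base: "x \<in> X \<Longrightarrow> x \<in> kgen X"
| const: "Poly_Mapping.single 0 c \<in> kgen X"
| add: "x \<in> kgen X \<Longrightarrow> y \<in> kgen X \<Longrightarrow> x + y \<in> kgen X"
| mult: "x \<in> kgen X \<Longrightarrow> y \<in> kgen X \<Longrightarrow> x * y \<in> kgen X"

text \<open>Contracting the arrows in Q1s: vertices of Q' are the classes of the equivalence
  relation on V generated by the contracted arrows; arrows of Q' are E - Q1s.\<close>
definition contr_cls :: "'v set \<Rightarrow> 'a set \<Rightarrow> ('a \<Rightarrow> 'v) \<Rightarrow> ('a \<Rightarrow> 'v) \<Rightarrow> 'v \<Rightarrow> 'v set" where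
  "contr_cls V Q1s h t v = {w \<in> V. (v, w) \<in> ({(t a, h a) | a. a \<in> Q1s} \<union> {(h a, t a) | a. a \<in> Q1s})\<^sup>*}"

definition contr_path :: "'v set \<Rightarrow> 'a set \<Rightarrow> ('a \<Rightarrow> 'v) \<Rightarrow> ('a \<Rightarrow> 'v) \<Rightarrow> ('v,'a) path \<Rightarrow> ('v set,'a) path" where
  "contr_path V Q1s h t p = (contr_cls V Q1s h t (fst p), filter (\<lambda>a. a \<notin> Q1s) (snd p))"

definition contr_map :: "'v set \<Rightarrow> 'a set \<Rightarrow> ('a \<Rightarrow> 'v) \<Rightarrow> ('a \<Rightarrow> 'v)
    \<Rightarrow> (('v,'a) path \<Rightarrow>\<^sub>0 'k::comm_ring_1) \<Rightarrow> (('v set,'a) path \<Rightarrow>\<^sub>0 'k)" where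
  "contr_map V Q1s h t x = (\<Sum>p\<in>Poly_Mapping.keys x. Poly_Mapping.single (contr_path V Q1s h t p) (Poly_Mapping.lookup x p))"

end

theory Submission
  imports Defs
begin


definition lin :: "('p \<Rightarrow> 'k::zero \<Rightarrow> 'b::comm_monoid_add) \<Rightarrow> ('p \<Rightarrow>\<^sub>0 'k) \<Rightarrow> 'b" where
  "lin G x = (\<Sum>p\<in>Poly_Mapping.keys x. G p (Poly_Mapping.lookup x p))"

locale addG =
  fixes G :: "'p \<Rightarrow> 'k::comm_monoid_add \<Rightarrow> 'b::comm_monoid_add"
  assumes G0: "\<And>p. G p 0 = 0"
  and Gadd: "\<And>p a b. G p (a + b) = G p a + G p b"
begin

lemma lin_superset:
  assumes "finite S" "Poly_Mapping.keys x \<subseteq> S"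
  shows "lin G x = (\<Sum>p\<in>S. G p (Poly_Mapping.lookup x p))"
  unfolding lin_def
  by (rule sum.mono_neutral_left) (use assms in \<open>auto simp: in_keys_iff G0\<close>)

lemma lin_add: "lin G (x + y) = lin G x + lin G y"
proof -
  let ?S = "Poly_Mapping.keys x \<union> Poly_Mapping.keys y"
  have "lin G (x + y) = (\<Sum>p\<in>?S. G p (Poly_Mapping.lookup (x+y) p))"
    by (rule lin_superset) (use keys_add[of x y] in auto)
  also have "\<dots> = (\<Sum>p\<in>?S. G p (Poly_Mapping.lookup x p)) + (\<Sum>p\<in>?S. G p (Poly_Mapping.lookup y p))"
    by (simp add: lookup_add Gadd sum.distrib)
  also have "\<dots> = lin G x + lin G y"
    by (simp add: lin_superset[of ?S x] lin_superset[of ?S y])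
  finally show ?thesis .
qed

lemma lin_zero[simp]: "lin G 0 = 0"
  by (simp add: lin_def)

lemma lin_single[simp]: "lin G (Poly_Mapping.single p c) = G p c"
  by (cases "c = 0") (auto simp: lin_def G0)

lemma lin_sum: "lin G (\<Sum>i\<in>A. f i) = (\<Sum>i\<in>A. lin G (f i))"
  by (induction A rule: infinite_finite_induct) (auto simp: lin_add)

end

lemma addG_ab:
  fixes G :: "'p \<Rightarrow> 'k::ab_group_add \<Rightarrow> 'b::ab_group_add"
  assumes "addG G"
  shows "lin G (x - y) = lin G x - lin G y"
proof -
  have "lin G (x - y) + lin G y = lin G x"
    using addG.lin_add[OF assms, of "x - y" y] by simp
  then show ?thesis by (simp add: eq_diff_eq)
qed



lemma funpow_in:
  assumes "\<forall>x\<in>E. f x \<in> E" "a \<in> E" shows "(f ^^ m) a \<in> E"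
  using assms by (induction m) auto

lemma funpow_cancel:
  assumes "inj_on f E" "\<forall>x\<in>E. f x \<in> E" "a \<in> E" "k \<le> l" "(f ^^ k) a = (f ^^ l) a"
  shows "(f ^^ (l - k)) a = a"
  using assms(4,5)
proof (induction k arbitrary: l)
  case 0 then show ?case by simp
next
  case (Suc k)
  then obtain l' where l: "l = Suc l'" by (cases l) auto
  have "f ((f ^^ k) a) = f ((f ^^ l') a)" using Suc.prems l by simp
  then have "(f ^^ k) a = (f ^^ l') a"
    using inj_onD[OF assms(1)] funpow_in[OF assms(2,3)] by blast
  then show ?case using Suc.IH[of l'] Suc.prems l by simp
qed

lemma orbit_exists:
  assumes "finite E" "inj_on f E" "\<forall>x\<in>E. f x \<in> E" "a \<in> E"
  shows "\<exists>n. 0 < n \<and> (f ^^ n) a = a"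
proof -
  have "(\<lambda>k. (f ^^ k) a) ` {0..card E} \<subseteq> E" using funpow_in[OF assms(3,4)] by auto
  then have "card ((\<lambda>k. (f ^^ k) a) ` {0..card E}) \<le> card E" by (simp add: card_mono assms(1))
  then have "\<not> inj_on (\<lambda>k. (f ^^ k) a) {0..card E}"
    using card_image by fastforce
  then obtain k l where kl: "k \<noteq> l" "(f ^^ k) a = (f ^^ l) a"
    unfolding inj_on_def by blast
  show ?thesis
  proof (cases "k < l")
    case True
    then show ?thesis using funpow_cancel[OF assms(2,3,4), of k l] kl by (intro exI[of _ "l - k"]) auto
  next
    case False
    then show ?thesis using funpow_cancel[OF assms(2,3,4), of l k] kl by (intro exI[of _ "k - l"]) auto
  qed
qed

lemma funpow_period:
  assumes "(f ^^ n) a = a" shows "(f ^^ (n * q)) a = a"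
  using assms by (induction q) (auto simp: funpow_add)

lemma funpow_mod:
  assumes "(f ^^ n) a = a" shows "(f ^^ m) a = (f ^^ (m mod n)) a"
proof -
  have "(f ^^ m) a = (f ^^ (m mod n + n * (m div n))) a" by simp
  also have "\<dots> = (f ^^ (m mod n)) ((f ^^ (n * (m div n))) a)" by (simp only: funpow_add comp_apply)
  also have "\<dots> = (f ^^ (m mod n)) a" using funpow_period[OF assms] by simp
  finally show ?thesis .
qed

lemma orbit_facts:
  assumes "finite E" "bij_betw f E E" "a \<in> E"
  shows "0 < orbit_len f a" "(f ^^ orbit_len f a) a = a"
    "distinct (cyc f a)" "set (cyc f a) = {(f ^^ n) a | n. True}"
    "cyc f a = a # tl (cyc f a)"
    "tl (cyc f a) = map (\<lambda>n. (f ^^ n) a) [1..<orbit_len f a]"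
proof -
  have inj: "inj_on f E" and cl: "\<forall>x\<in>E. f x \<in> E"
    using assms(2) by (auto simp: bij_betw_def)
  obtain n0 where n0: "0 < n0 \<and> (f ^^ n0) a = a" using orbit_exists[OF assms(1) inj cl assms(3)] by blast
  have L: "0 < orbit_len f a \<and> (f ^^ orbit_len f a) a = a"
    unfolding orbit_len_def by (rule LeastI[of _ n0]) (use n0 in auto)
  then show "0 < orbit_len f a" "(f ^^ orbit_len f a) a = a" by auto
  have min: "\<And>m. 0 < m \<Longrightarrow> m < orbit_len f a \<Longrightarrow> (f ^^ m) a \<noteq> a"
    unfolding orbit_len_def using not_less_Least by blast
  show "distinct (cyc f a)"
    unfolding cyc_def distinct_map
  proof (intro conjI inj_onI)
    fix k l assume k: "k \<in> set [0..<orbit_len f a]" and l: "l \<in> set [0..<orbit_len f a]"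
      and e: "(f ^^ k) a = (f ^^ l) a"
    show "k = l"
    proof (rule ccontr)
      assume "k \<noteq> l"
      then consider "k < l" | "l < k" by linarith
      then show False
      proof cases
        case 1
        have "l - k < orbit_len f a" using l by auto
        then show ?thesis using 1 funpow_cancel[OF inj cl assms(3), of k l] e min[of "l - k"] by auto
      next
        case 2
        have "k - l < orbit_len f a" using k by auto
        then show ?thesis using 2 funpow_cancel[OF inj cl assms(3), of l k] e min[of "k - l"] by auto
      qed
    qed
  qed simp
  show "set (cyc f a) = {(f ^^ n) a | n. True}"
  proof
    show "set (cyc f a) \<subseteq> {(f ^^ n) a | n. True}" unfolding cyc_def by auto
    show "{(f ^^ n) a | n. True} \<subseteq> set (cyc f a)"
    proof
      fix x assume "x \<in> {(f ^^ n) a | n. True}"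
      then obtain m where "x = (f ^^ m) a" by blast
      then have "x = (f ^^ (m mod orbit_len f a)) a" using funpow_mod L by metis
      moreover have "m mod orbit_len f a < orbit_len f a" using L by simp
      ultimately show "x \<in> set (cyc f a)" unfolding cyc_def by auto
    qed
  qed
  have up: "[0..<orbit_len f a] = 0 # [1..<orbit_len f a]" using L upt_rec by auto
  have "cyc f a = map (\<lambda>n. (f ^^ n) a) (0 # [1..<orbit_len f a])"
    by (simp only: cyc_def up)
  then show "cyc f a = a # tl (cyc f a)" by simp
  have "tl (cyc f a) = tl (map (\<lambda>n. (f ^^ n) a) (0 # [1..<orbit_len f a]))"
    by (simp only: cyc_def up)
  then show "tl (cyc f a) = map (\<lambda>n. (f ^^ n) a) [1..<orbit_len f a]" by (simp only: list.map list.sel)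
qed

lemma rest_phead:
  assumes "finite E" "bij_betw f E E" "a \<in> E" "\<forall>b\<in>E. t (f b) = h b"
  shows "phead h (rest f h a) = t a"
proof -
  have cl: "\<forall>x\<in>E. f x \<in> E" using assms(2) by (auto simp: bij_betw_def)
  note O = orbit_facts[OF assms(1-3)]
  let ?n = "orbit_len f a"
  show ?thesis
  proof (cases "?n = 1")
    case True
    then have "f a = a" using O(2) by simp
    then have "t a = h a" using assms(4) assms(3) by metis
    then show ?thesis using O(6) True by (simp add: phead_def rest_def)
  next
    case False
    then have n: "?n > 1" using O(1) by simp
    then have "last (tl (cyc f a)) = (f ^^ (?n - 1)) a" using O(6)
      by (simp add: last_map)
    moreover have "tl (cyc f a) \<noteq> []" using O(6) n by simp
    moreover have "t a = h ((f ^^ (?n - 1)) a)"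
    proof -
      have "t ((f ^^ Suc (?n - 1)) a) = h ((f ^^ (?n - 1)) a)"
        using assms(4) funpow_in[OF cl assms(3)] by simp
      then show ?thesis using O(2) n by simp
    qed
    ultimately show ?thesis by (simp add: phead_def rest_def)
  qed
qed



definition ex :: "'a set set \<Rightarrow> 'a list \<Rightarrow> ('a set \<Rightarrow>\<^sub>0 nat)" where
  "ex S l = sum_list (map (arrow_exp S) l)"

lemma ex_Nil[simp]: "ex S [] = 0"
  by (simp add: ex_def)

lemma ex_append[simp]: "ex S (l1 @ l2) = ex S l1 + ex S l2"
  by (simp add: ex_def)

lemma ex_cycle:
  assumes fin: "finite E" "finite S" and bij: "bij_betw f E E" and a: "a \<in> E"
    and pm: "\<forall>D\<in>S. \<forall>F\<in>faces f E. card (D \<inter> F) = 1"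
  shows "arrow_exp S a + ex S (tl (cyc f a)) = (\<Sum>D\<in>S. Poly_Mapping.single D 1)"
proof -
  note O = orbit_facts[OF fin(1) bij a]
  let ?O = "{(f ^^ n) a | n. True}"
  have OF: "?O \<in> faces f E" unfolding faces_def using a by blast
  have fO: "finite ?O" using O(4) by (metis List.finite_set)
  have "arrow_exp S a + ex S (tl (cyc f a)) = ex S (cyc f a)"
    by (subst (2) O(5)) (simp add: ex_def)
  also have "\<dots> = (\<Sum>x\<in>?O. arrow_exp S x)"
    unfolding ex_def by (simp add: sum_list_distinct_conv_sum_set O(3) O(4))
  also have "\<dots> = (\<Sum>x\<in>?O. \<Sum>D\<in>{D. D \<in> S \<and> x \<in> D}. Poly_Mapping.single D 1)"
    unfolding arrow_exp_def by simp
  also have "\<dots> = (\<Sum>D\<in>S. \<Sum>x\<in>{x. x \<in> ?O \<and> x \<in> D}. Poly_Mapping.single D 1)"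
    by (rule sum.swap_restrict[OF fO fin(2)])
  also have "\<dots> = (\<Sum>D\<in>S. Poly_Mapping.single D 1)"
  proof (rule sum.cong[OF refl])
    fix D assume "D \<in> S"
    then have "card (D \<inter> ?O) = 1" using pm OF by blast
    then obtain y where "D \<inter> ?O = {y}" using card_1_singletonE by blast
    then have "{x. x \<in> ?O \<and> x \<in> D} = {y}" by blast
    then show "(\<Sum>x\<in>{x. x \<in> ?O \<and> x \<in> D}. Poly_Mapping.single D (1::nat)) = Poly_Mapping.single D 1"
      by simp
  qed
  finally show ?thesis .
qed



lemma addG_if: "addG (\<lambda>p c. if P p then Poly_Mapping.single (f p) (c::'k::comm_monoid_add) else 0)"
  by unfold_locales (auto simp: single_add)

lemma addG_single: "addG (\<lambda>p c. Poly_Mapping.single (f p) (c::'k::comm_monoid_add))"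
  by unfold_locales (auto simp: single_add)

definition Wt :: "'a set set \<Rightarrow> ('a \<Rightarrow> 'w) \<Rightarrow> 'w \<Rightarrow> 'w \<Rightarrow> (('w,'a) path \<Rightarrow>\<^sub>0 'k::comm_ring_1) \<Rightarrow> ('a,'k) mpoly" where
  "Wt S h u w x = lin (\<lambda>p c. if fst p = u \<and> phead h p = w then Poly_Mapping.single (ex S (snd p)) c else 0) x"

lemma Wt_add: "Wt S h u w (x + y) = Wt S h u w x + Wt S h u w y"
  unfolding Wt_def by (rule addG.lin_add[OF addG_if])

lemma Wt_diff: "Wt S h u w (x - y) = Wt S h u w x - Wt S h u w y"
  unfolding Wt_def by (rule addG_ab[OF addG_if])

lemma Wt_single: "Wt S h u w (Poly_Mapping.single p c) = (if fst p = u \<and> phead h p = w then Poly_Mapping.single (ex S (snd p)) c else 0)"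
  unfolding Wt_def by (rule addG.lin_single[OF addG_if])

lemma Wt_sum: "Wt S h u w (\<Sum>i\<in>A. f i) = (\<Sum>i\<in>A. Wt S h u w (f i))"
  unfolding Wt_def by (rule addG.lin_sum[OF addG_if])

lemma Wt_if: "Wt S h u w (if c then Poly_Mapping.single p v else 0) = (if c then Wt S h u w (Poly_Mapping.single p v) else 0)"
  by (simp add: Wt_def lin_def)

lemma lookup_map_mult: "Poly_Mapping.lookup (Poly_Mapping.map ((*) (c::'k::comm_ring_1)) x) p = c * Poly_Mapping.lookup x p"
  by (simp add: map.rep_eq when_def)

lemma keys_map_mult: "Poly_Mapping.keys (Poly_Mapping.map ((*) (c::'k::comm_ring_1)) x) \<subseteq> Poly_Mapping.keys x"
  by (auto simp: in_keys_iff lookup_map_mult)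

lemma Wt_smult: "Wt S h u w (Poly_Mapping.map ((*) (c::'k::comm_ring_1)) x) = Poly_Mapping.single 0 c * Wt S h u w x"
proof -
  have "Wt S h u w (Poly_Mapping.map ((*) c) x) =
     (\<Sum>p\<in>Poly_Mapping.keys x. (if fst p = u \<and> phead h p = w then Poly_Mapping.single (ex S (snd p)) (c * Poly_Mapping.lookup x p) else 0))"
    unfolding Wt_def apply (subst addG.lin_superset[OF addG_if _ keys_map_mult]) apply simp apply (simp only: lookup_map_mult) done
  also have "\<dots> = Poly_Mapping.single 0 c * Wt S h u w x"
    unfolding Wt_def lin_def sum_distrib_left by (rule sum.cong) (auto simp: mult_single)
  finally show ?thesis .
qed

lemma phead_app:
  "fst p = phead h q \<Longrightarrow> phead h (fst q, snd q @ snd p) = phead h p"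
  by (auto simp: phead_def)

lemma Wt_lmult:
  assumes "\<And>u' w'. Wt S h u' w' y = 0"
  shows "Wt S h u w (pmul h r y) = 0"
proof -
  have "Wt S h u w (pmul h r y) = (\<Sum>p\<in>Poly_Mapping.keys r. \<Sum>q\<in>Poly_Mapping.keys y.
      if fst p = phead h q then (if fst q = u \<and> phead h (fst q, snd q @ snd p) = w then
         Poly_Mapping.single (ex S (snd q @ snd p)) (Poly_Mapping.lookup r p * Poly_Mapping.lookup y q) else 0) else 0)"
    unfolding pmul_def Wt_sum by (simp only: Wt_if Wt_single fst_conv snd_conv)
  also have "\<dots> = (\<Sum>p\<in>Poly_Mapping.keys r. if phead h p = w then
      Poly_Mapping.single (ex S (snd p)) (Poly_Mapping.lookup r p) * Wt S h u (fst p) y else 0)"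
  proof (rule sum.cong[OF refl])
    fix p
    show "(\<Sum>q\<in>Poly_Mapping.keys y.
      if fst p = phead h q then (if fst q = u \<and> phead h (fst q, snd q @ snd p) = w then
         Poly_Mapping.single (ex S (snd q @ snd p)) (Poly_Mapping.lookup r p * Poly_Mapping.lookup y q) else 0) else 0)
      = (if phead h p = w then Poly_Mapping.single (ex S (snd p)) (Poly_Mapping.lookup r p) * Wt S h u (fst p) y else 0)"
      unfolding Wt_def lin_def sum_distrib_left
      by (auto intro!: sum.cong sum.neutral simp: phead_def mult_single add.commute)
  qed
  also have "\<dots> = 0" by (rule sum.neutral) (simp add: assms)
  finally show ?thesis .
qed

lemma Wt_rmult:
  assumes "\<And>u' w'. Wt S h u' w' y = 0"
  shows "Wt S h u w (pmul h y r) = 0"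
proof -
  have "Wt S h u w (pmul h y r) = (\<Sum>p\<in>Poly_Mapping.keys y. \<Sum>q\<in>Poly_Mapping.keys r.
      if fst p = phead h q then (if fst q = u \<and> phead h (fst q, snd q @ snd p) = w then
         Poly_Mapping.single (ex S (snd q @ snd p)) (Poly_Mapping.lookup y p * Poly_Mapping.lookup r q) else 0) else 0)"
    unfolding pmul_def Wt_sum by (simp only: Wt_if Wt_single fst_conv snd_conv)
  also have "\<dots> = (\<Sum>q\<in>Poly_Mapping.keys r. \<Sum>p\<in>Poly_Mapping.keys y.
      if fst p = phead h q then (if fst q = u \<and> phead h (fst q, snd q @ snd p) = w then
         Poly_Mapping.single (ex S (snd q @ snd p)) (Poly_Mapping.lookup y p * Poly_Mapping.lookup r q) else 0) else 0)"
    by (rule sum.swap)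
  also have "\<dots> = (\<Sum>q\<in>Poly_Mapping.keys r. if fst q = u then
      Poly_Mapping.single (ex S (snd q)) (Poly_Mapping.lookup r q) * Wt S h (phead h q) w y else 0)"
  proof (rule sum.cong[OF refl])
    fix q
    show "(\<Sum>p\<in>Poly_Mapping.keys y.
      if fst p = phead h q then (if fst q = u \<and> phead h (fst q, snd q @ snd p) = w then
         Poly_Mapping.single (ex S (snd q @ snd p)) (Poly_Mapping.lookup y p * Poly_Mapping.lookup r q) else 0) else 0)
      = (if fst q = u then Poly_Mapping.single (ex S (snd q)) (Poly_Mapping.lookup r q) * Wt S h (phead h q) w y else 0)"
      unfolding Wt_def lin_def sum_distrib_left
      by (auto intro!: sum.cong sum.neutral simp: phead_def mult_single mult.commute)
  qed
  also have "\<dots> = 0" by (rule sum.neutral) (simp add: assms)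
  finally show ?thesis .
qed



lemma ideal_Wt:
  fixes x :: "('w,'a) path \<Rightarrow>\<^sub>0 'k::comm_ring_1"
  assumes dq: "dimer_quiver V E h t sp sm" and S: "\<forall>D\<in>S. perfect_matching E sp sm D" "finite S"
    and x: "x \<in> dimer_ideal V E h t sp sm"
  shows "Wt S h u w x = 0"
  using x
proof (induction arbitrary: u w)
  case (gen a)
  have fE: "finite E" and bp: "bij_betw sp E E" and bm: "bij_betw sm E E"
    and tp: "\<forall>b\<in>E. t (sp b) = h b" and tm: "\<forall>b\<in>E. t (sm b) = h b"
    using dq unfolding dimer_quiver_def by auto
  have pmp: "\<forall>D\<in>S. \<forall>F\<in>faces sp E. card (D \<inter> F) = 1"
    and pmm: "\<forall>D\<in>S. \<forall>F\<in>faces sm E. card (D \<inter> F) = 1"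
    using S(1) unfolding perfect_matching_def by auto
  have e1: "arrow_exp S a + ex S (tl (cyc sp a)) = (\<Sum>D\<in>S. Poly_Mapping.single D 1)"
    by (rule ex_cycle[OF fE S(2) bp gen pmp])
  have e2: "arrow_exp S a + ex S (tl (cyc sm a)) = (\<Sum>D\<in>S. Poly_Mapping.single D 1)"
    by (rule ex_cycle[OF fE S(2) bm gen pmm])
  have ee: "ex S (snd (rest sp h a)) = ex S (snd (rest sm h a))"
  proof -
    have "arrow_exp S a + ex S (tl (cyc sp a)) = arrow_exp S a + ex S (tl (cyc sm a))"
      using e1 e2 by simp
    then show ?thesis by (simp add: rest_def)
  qed
  have ph: "phead h (rest sp h a) = phead h (rest sm h a)"
    using rest_phead[OF fE bp gen tp] rest_phead[OF fE bm gen tm] by simp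
  have fs: "fst (rest sp h a) = fst (rest sm h a)" by (simp add: rest_def)
  show ?case
    unfolding Wt_diff pelt_def Wt_single using ee ph fs by simp
next
  case zero
  then show ?case by (simp add: Wt_def lin_def)
next
  case (add x y)
  then show ?case by (simp add: Wt_add)
next
  case (smult x c)
  then show ?case by (simp add: Wt_smult)
next
  case (lmult x r)
  then show ?case by (intro Wt_lmult) auto
next
  case (rmult x r)
  then show ?case by (intro Wt_rmult) auto
qed

lemma taubar_Wt:
  assumes "\<And>u w. Wt S h u w x = 0"
  shows "taubar S x = 0"
proof -
  let ?g = "\<lambda>p. Poly_Mapping.single (ex S (snd p)) (Poly_Mapping.lookup x p)"
  let ?k = "\<lambda>p. (fst p, phead h p)"
  have "taubar S x = (\<Sum>p\<in>Poly_Mapping.keys x. ?g p)"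
    unfolding taubar_def ex_def by simp
  also have "\<dots> = (\<Sum>k\<in>?k ` Poly_Mapping.keys x. \<Sum>p\<in>{p. p \<in> Poly_Mapping.keys x \<and> ?k p = k}. ?g p)"
    by (rule sum.image_gen) simp
  also have "\<dots> = (\<Sum>k\<in>?k ` Poly_Mapping.keys x. Wt S h (fst k) (snd k) x)"
  proof (rule sum.cong[OF refl])
    fix k
    show "(\<Sum>p\<in>{p. p \<in> Poly_Mapping.keys x \<and> ?k p = k}. ?g p) = Wt S h (fst k) (snd k) x"
      unfolding Wt_def lin_def
      by (subst sum.inter_filter) (auto intro!: sum.cong simp: prod_eq_iff)
  qed
  also have "\<dots> = 0" by (simp add: assms)
  finally show ?thesis .
qed



lemma if01_mult: "(if c then 1 else 0) * (x::'k::comm_ring_1) = (if c then x else 0)"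
  by simp

lemma lookup_single_mult:
  fixes A :: "('b \<Rightarrow>\<^sub>0 nat) \<Rightarrow>\<^sub>0 'k::comm_ring_1"
  shows "Poly_Mapping.lookup (Poly_Mapping.single m 1 * A) (m + k) = Poly_Mapping.lookup A k"
proof -
  have "Poly_Mapping.lookup (Poly_Mapping.single m 1 * A) (m + k) =
    (\<Sum>a. if m = a then (\<Sum>aa. if m + k = a + aa then Poly_Mapping.lookup A aa else 0) else 0)"
    by (simp add: lookup_mult lookup_single when_def if01_mult del: Sum_any.delta')
  also have "\<dots> = (\<Sum>aa. if m + k = m + aa then Poly_Mapping.lookup A aa else 0)"
    by (rule Sum_any.delta')
  also have "\<dots> = (\<Sum>aa. if k = aa then Poly_Mapping.lookup A aa else 0)"
    by simp
  also have "\<dots> = Poly_Mapping.lookup A k" by (rule Sum_any.delta')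
  finally show ?thesis .
qed

lemma single_mult_cancel:
  fixes A B :: "('b \<Rightarrow>\<^sub>0 nat) \<Rightarrow>\<^sub>0 'k::comm_ring_1"
  assumes "Poly_Mapping.single m 1 * A = Poly_Mapping.single m 1 * B"
  shows "A = B"
proof (rule poly_mapping_eqI)
  fix k
  have "Poly_Mapping.lookup (Poly_Mapping.single m 1 * A) (m + k) = Poly_Mapping.lookup (Poly_Mapping.single m 1 * B) (m + k)"
    using assms by simp
  then show "Poly_Mapping.lookup A k = Poly_Mapping.lookup B k" by (simp add: lookup_single_mult)
qed



definition excp :: "'a set \<Rightarrow> 'a set set \<Rightarrow> ('v,'a) path \<Rightarrow> ('a set \<Rightarrow>\<^sub>0 nat)" where
  "excp Q1s S p = ex S (filter (\<lambda>a. a \<notin> Q1s) (snd p))"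

lemma taubar_lin: "taubar S x = lin (\<lambda>p c. Poly_Mapping.single (ex S (snd p)) c) x"
  by (simp add: taubar_def lin_def ex_def)

lemma T_lin:
  fixes x :: "('v,'a) path \<Rightarrow>\<^sub>0 'k::comm_ring_1"
  shows "taubar S (contr_map V Q1s h t x) = lin (\<lambda>p c. Poly_Mapping.single (excp Q1s S p) c) x"
proof -
  have "taubar S (contr_map V Q1s h t x) =
     (\<Sum>p\<in>Poly_Mapping.keys x. lin (\<lambda>p c. Poly_Mapping.single (ex S (snd p)) c)
        (Poly_Mapping.single (contr_path V Q1s h t p) (Poly_Mapping.lookup x p)))"
    unfolding contr_map_def taubar_lin by (rule addG.lin_sum[OF addG_single])
  also have "\<dots> = lin (\<lambda>p c. Poly_Mapping.single (excp Q1s S p) c) x"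
    unfolding addG.lin_single[OF addG_single] by (simp add: lin_def excp_def contr_path_def)
  finally show ?thesis .
qed

lemma lin_comp:
  assumes "addG G"
  shows "lin G (lin (\<lambda>p a. if P p then Poly_Mapping.single (f p) a else 0) z)
       = lin (\<lambda>p a. if P p then G (f p) a else 0) z"
proof -
  have "lin (\<lambda>p a. if P p then Poly_Mapping.single (f p) a else 0) z
     = (\<Sum>p\<in>Poly_Mapping.keys z. if P p then Poly_Mapping.single (f p) (Poly_Mapping.lookup z p) else 0)"
    by (simp add: lin_def)
  then have "lin G (lin (\<lambda>p a. if P p then Poly_Mapping.single (f p) a else 0) z)
     = (\<Sum>p\<in>Poly_Mapping.keys z. lin G (if P p then Poly_Mapping.single (f p) (Poly_Mapping.lookup z p) else 0))"
    by (simp only: addG.lin_sum[OF assms])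
  also have "\<dots> = (\<Sum>p\<in>Poly_Mapping.keys z. if P p then G (f p) (Poly_Mapping.lookup z p) else 0)"
    by (rule sum.cong) (simp_all add: addG.lin_single[OF assms] addG.lin_zero[OF assms])
  finally show ?thesis by (simp only: lin_def)
qed

lemma single_mult_lin:
  "Poly_Mapping.single m 1 * lin (\<lambda>p a. if P p then Poly_Mapping.single (g p) a else 0) z
   = lin (\<lambda>p a. if P p then Poly_Mapping.single (m + g p) (a::'k::comm_ring_1) else 0) z"
  unfolding lin_def sum_distrib_left by (rule sum.cong) (auto simp: mult_single)

lemma keys_lin_filter:
  "Poly_Mapping.keys (lin (\<lambda>p a. if P p then Poly_Mapping.single p a else 0) z) \<subseteq> {p \<in> Poly_Mapping.keys z. P p}"
proof -
  have "Poly_Mapping.keys (lin (\<lambda>p a. if P p then Poly_Mapping.single p a else 0) z)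
     \<subseteq> (\<Union>p\<in>Poly_Mapping.keys z. Poly_Mapping.keys (if P p then Poly_Mapping.single p (Poly_Mapping.lookup z p) else 0))"
    unfolding lin_def by (rule keys_sum)
  also have "\<dots> \<subseteq> {p \<in> Poly_Mapping.keys z. P p}" by (auto split: if_splits)
  finally show ?thesis .
qed

context
  fixes h :: "'a \<Rightarrow> 'v"
begin

lemma pmul_idem_left:
  "pmul h (idem j) (x :: ('v,'a) path \<Rightarrow>\<^sub>0 'k::field) = lin (\<lambda>q b. if j = phead h q then Poly_Mapping.single q b else 0) x"
  unfolding pmul_def idem_def pelt_def
  apply (subst keys_single) by (simp add: lin_def) (simp only: snd_conv append_Nil2 lookup_single_eq prod.collapse mult_1)

lemma pmul_idem_right:
  "pmul h (x :: ('v,'a) path \<Rightarrow>\<^sub>0 'k::field) (idem j) = lin (\<lambda>p a. if fst p = j then Poly_Mapping.single p a else 0) x"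
  unfolding pmul_def idem_def pelt_def lin_def
  by (rule sum.cong) (auto simp: phead_def)

lemma pmul_arrow_right:
  "pmul h (x :: ('v,'a) path \<Rightarrow>\<^sub>0 'k::field) (pelt (t, [b])) = lin (\<lambda>p a. if fst p = h b then Poly_Mapping.single (t, b # snd p) a else 0) x"
  unfolding pmul_def pelt_def lin_def
  by (rule sum.cong) (auto simp: phead_def)

lemma pmul_arrow_left:
  "pmul h (pelt (t, [b])) (x :: ('v,'a) path \<Rightarrow>\<^sub>0 'k::field) = lin (\<lambda>q c. if t = phead h q then Poly_Mapping.single (fst q, snd q @ [b]) c else 0) x"
  unfolding pmul_def pelt_def
  apply (subst keys_single) by (simp add: lin_def) (simp only: snd_conv lookup_single_eq mult_1)

end

lemma pmul_idem_left_diff: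
  "pmul h (idem j) ((x :: ('v,'a) path \<Rightarrow>\<^sub>0 'k::field) - y) = pmul h (idem j) x - pmul h (idem j) y"
  unfolding pmul_idem_left by (rule addG_ab[OF addG_if])



lemma excp_cons: "excp Q1s S (v, b # snd p) = ex S (filter (\<lambda>a. a \<notin> Q1s) [b]) + excp Q1s S p"
  unfolding excp_def by (simp add: ex_def)

lemma excp_snoc: "excp Q1s S (v, snd p @ [b]) = excp Q1s S p + ex S (filter (\<lambda>a. a \<notin> Q1s) [b])"
  unfolding excp_def by (simp add: ex_def)

lemma in_kQ_idem: "j \<in> V \<Longrightarrow> in_kQ V E h t (idem j :: ('v,'a) path \<Rightarrow>\<^sub>0 'k::field)"
  by (simp add: in_kQ_def idem_def pelt_def valid_path_def)

lemma in_kQ_arrow: "b \<in> E \<Longrightarrow> t b \<in> V \<Longrightarrow> in_kQ V E h t (pelt (t b, [b]) :: ('v,'a) path \<Rightarrow>\<^sub>0 'k::field)"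
  by (simp add: in_kQ_def pelt_def valid_path_def)

theorem lemma3p14:
  fixes V :: "'v set" and E :: "'a set" and h t :: "'a \<Rightarrow> 'v"
    and sp sm sp' sm' :: "'a \<Rightarrow> 'a" and Q1s :: "'a set"
    and z :: "('v,'a) path \<Rightarrow>\<^sub>0 'k::alg_closed_field" and i :: 'v
  defines "V' \<equiv> contr_cls V Q1s h t ` V"
    and "E' \<equiv> E - Q1s"
    and "h' \<equiv> (\<lambda>a. contr_cls V Q1s h t (h a))"
    and "t' \<equiv> (\<lambda>a. contr_cls V Q1s h t (t a))"
    and "\<psi> \<equiv> (contr_map V Q1s h t :: (('v,'a) path \<Rightarrow>\<^sub>0 'k) \<Rightarrow> _)"
    and "S' \<equiv> simple_matchings (contr_cls V Q1s h t ` V) (E - Q1s)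
                 (\<lambda>a. contr_cls V Q1s h t (h a)) (\<lambda>a. contr_cls V Q1s h t (t a)) sp' sm'"
  assumes dimer: "dimer_quiver V E h t sp sm"
    and nondeg: "nondegenerate E sp sm"
    \<comment> \<open>psi : A \<rightarrow> A' is a contraction\<close>
    and Q1s: "Q1s \<subseteq> E"
    and dimer': "dimer_quiver V' E' h' t' sp' sm'"
    and ideal_map: "\<psi> ` dimer_ideal V E h t sp sm \<subseteq> dimer_ideal V' E' h' t' sp' sm'"
    \<comment> \<open>the contraction is cyclic\<close>
    and cancel: "cancellative TYPE('k) V' E' h' t' sp' sm'"
    and cyclic: "kgen (\<Union>j\<in>V. taubar S' ` \<psi> ` corner V E h t j)
               = kgen (\<Union>j\<in>V'. taubar S' ` (corner V' E' h' t' j :: (('v set,'a) path \<Rightarrow>\<^sub>0 'k) set))"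
    and i: "i \<in> V"
    and z: "z \<in> center V E h t sp sm"
  shows "taubar S' (\<psi> (pmul h z (idem i))) \<in> kgen (\<Inter>j\<in>V. taubar S' ` \<psi> ` corner V E h t j)"
proof -
  define T where "T = (\<lambda>x. taubar S' (\<psi> x))"
  define GT where "GT = (\<lambda>(p::('v,'a) path) (c::'k). Poly_Mapping.single (excp Q1s S' p) c)"
  have addGT: "addG GT" unfolding GT_def by (rule addG_single)
  have Tlin: "T x = lin GT x" for x
    unfolding T_def GT_def \<psi>_def by (rule T_lin)
  have Tdiff: "T (x - y) = T x - T y" for x y
    unfolding Tlin by (rule addG_ab[OF addGT])
  have S'pm: "S' \<subseteq> {D. perfect_matching E' sp' sm' D}"
    unfolding S'_def simple_matchings_def E'_def by auto
  have finE': "finite E'" using dimer' unfolding dimer_quiver_def by auto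
  have finS': "finite S'"
  proof (rule finite_subset)
    show "S' \<subseteq> Pow E'" using S'pm unfolding perfect_matching_def by auto
  qed (use finE' in auto)
  have TI: "T x = 0" if "x \<in> dimer_ideal V E h t sp sm" for x
  proof -
    have xi: "\<psi> x \<in> dimer_ideal V' E' h' t' sp' sm'" using ideal_map that by auto
    have pm: "\<forall>D\<in>S'. perfect_matching E' sp' sm' D" using S'pm by auto
    have "Wt S' h' u w (\<psi> x) = 0" for u w
      by (rule ideal_Wt[OF dimer' pm finS' xi])
    then have "taubar S' (\<psi> x) = 0" by (rule taubar_Wt)
    then show ?thesis unfolding T_def .
  qed
  have zkQ: "in_kQ V E h t z" and zc: "\<And>x. in_kQ V E h t x \<Longrightarrow> pmul h z x - pmul h x z \<in> dimer_ideal V E h t sp sm"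
    using z unfolding center_def by auto
  have Tcomm: "T (pmul h z x) = T (pmul h x z)" if "in_kQ V E h t x" for x
    using TI[OF zc[OF that]] Tdiff by simp
  define Tst where "Tst j = lin (\<lambda>p a. if fst p = j then Poly_Mapping.single (excp Q1s S' p) a else 0) z" for j
  define Ten where "Ten j = lin (\<lambda>p a. if j = phead h p then Poly_Mapping.single (excp Q1s S' p) a else 0) z" for j
  have Tst: "T (pmul h z (idem j)) = Tst j" for j
    unfolding Tlin pmul_idem_right Tst_def lin_comp[OF addGT] by (simp add: GT_def cong: if_cong)
  have Ten: "T (pmul h (idem j) z) = Ten j" for j
    unfolding Tlin pmul_idem_left Ten_def lin_comp[OF addGT] by (simp add: GT_def cong: if_cong)
  have stend: "Tst j = Ten j" if "j \<in> V" for j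
    using Tcomm[OF in_kQ_idem[OF that]] Tst Ten by simp
  have arrow: "Tst (h b) = Tst (t b)" if b: "b \<in> E" for b
  proof -
    have tb: "t b \<in> V" and hb: "h b \<in> V" using dimer b unfolding dimer_quiver_def by auto
    define e1 where "e1 = ex S' (filter (\<lambda>a. a \<notin> Q1s) [b])"
    have "T (pmul h z (pelt (t b, [b]))) = lin (\<lambda>p a. if fst p = h b then Poly_Mapping.single (excp Q1s S' (t b, b # snd p)) a else 0) z"
      unfolding Tlin pmul_arrow_right lin_comp[OF addGT] by (simp add: GT_def cong: if_cong)
    also have "\<dots> = lin (\<lambda>p a. if fst p = h b then Poly_Mapping.single (e1 + excp Q1s S' p) a else 0) z"
      unfolding e1_def by (simp only: excp_cons)
    also have "\<dots> = Poly_Mapping.single e1 1 * Tst (h b)"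
      unfolding Tst_def single_mult_lin ..
    finally have 1: "T (pmul h z (pelt (t b, [b]))) = Poly_Mapping.single e1 1 * Tst (h b)" .
    have "T (pmul h (pelt (t b, [b])) z) = lin (\<lambda>q a. if t b = phead h q then Poly_Mapping.single (excp Q1s S' (fst q, snd q @ [b])) a else 0) z"
      unfolding Tlin pmul_arrow_left lin_comp[OF addGT] by (simp add: GT_def cong: if_cong)
    also have "\<dots> = lin (\<lambda>q a. if t b = phead h q then Poly_Mapping.single (e1 + excp Q1s S' q) a else 0) z"
      unfolding e1_def by (simp only: excp_snoc add.commute)
    also have "\<dots> = Poly_Mapping.single e1 1 * Ten (t b)"
      unfolding Ten_def single_mult_lin ..
    finally have 2: "T (pmul h (pelt (t b, [b])) z) = Poly_Mapping.single e1 1 * Ten (t b)" .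
    have "Poly_Mapping.single e1 1 * Tst (h b) = Poly_Mapping.single e1 1 * Ten (t b)"
      using Tcomm[OF in_kQ_arrow[of b E t V h, OF b tb]] 1 2 by simp
    then have "Tst (h b) = Ten (t b)" by (rule single_mult_cancel)
    then show ?thesis using stend[OF tb] by simp
  qed
  have conn: "Tst w = Tst i" if "w \<in> V" for w
  proof -
    have "(i, w) \<in> ({(t a, h a) | a. a \<in> E} \<union> {(h a, t a) | a. a \<in> E})\<^sup>*"
      using dimer i that unfolding dimer_quiver_def by blast
    then show ?thesis
    proof (induction rule: rtrancl_induct)
      case base then show ?case by simp
    next
      case (step y w')
      then show ?case using arrow by auto
    qed
  qed
  have corner_elt: "T (pmul h z (idem i)) \<in> taubar S' ` \<psi> ` corner V E h t j" if j: "j \<in> V" for j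
  proof -
    define c where "c = pmul h (idem j) (pmul h z (idem j))"
    have kc: "Poly_Mapping.keys c \<subseteq> {p \<in> Poly_Mapping.keys z. fst p = j \<and> phead h p = j}"
    proof -
      have "Poly_Mapping.keys c \<subseteq> {q \<in> Poly_Mapping.keys (pmul h z (idem j)). j = phead h q}"
        unfolding c_def pmul_idem_left by (rule keys_lin_filter)
      moreover have "Poly_Mapping.keys (pmul h z (idem j)) \<subseteq> {p \<in> Poly_Mapping.keys z. fst p = j}"
        unfolding pmul_idem_right by (rule keys_lin_filter)
      ultimately show ?thesis by auto
    qed
    have cc: "c \<in> corner V E h t j"
      using kc zkQ unfolding corner_def in_kQ_def by auto
    have idem2: "pmul h (idem j) (pmul h (idem j) z) = pmul h (idem j) z"
      unfolding pmul_idem_left[of h j "lin _ z"] pmul_idem_left[of h j z]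
      by (subst lin_comp[OF addG_if[where P = "\<lambda>q. j = phead h q" and f = "\<lambda>q. q"]]) (simp cong: if_cong)
    have "pmul h (idem j) (pmul h z (idem j) - pmul h (idem j) z) \<in> dimer_ideal V E h t sp sm"
      by (rule dimer_ideal.lmult[OF zc[OF in_kQ_idem[OF j]] in_kQ_idem[OF j]])
    then have "T c = T (pmul h (idem j) z)"
      using TI Tdiff unfolding c_def pmul_idem_left_diff idem2 by fastforce
    also have "\<dots> = Tst j" using Ten stend[OF j] by simp
    also have "\<dots> = T (pmul h z (idem i))" using conn[OF j] Tst by simp
    finally have eq: "taubar S' (\<psi> (pmul h z (idem i))) = taubar S' (\<psi> c)" unfolding T_def by simp
    show ?thesis unfolding T_def eq using cc by (intro imageI)
  qed
  show ?thesis
    by (rule kgen.base) (use corner_elt in \<open>auto simp: T_def\<close>)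
qed


end
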